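(* Let $R\in\mathbb{R}^{m\times N}$, $\lambda\ge 0$, and let $\sigma_1$ be the largest singular value of $R$, with corresponding left singular vector $u^1\in\mathbb{R}^m$ and right singular vector $v_1\in\mathbb{R}^{N}$ (unit vectors with $R v_1=\sigma_1 u^1$). Consider the problem $$\min_{d\in\mathbb{R}^m,\ \|d\|_2=1,\ x\in\mathbb{R}^{1\times N}}\ \frac12\|d\,x-R\|_F^2+\lambda\|x\|_2 .$$ If $\sigma_1\ge\lambda$, then $(d,x)=(u^1,(\sigma_1-\lambda)v_1^T)$ is a minimizer. Otherwise (if $\sigma_1<\lambda$), for any $d_0\in\mathbb{R}^m$ with $\|d_0\|_2=1$, the pair $(d_0,0)$ is a minimizer; in particular the optimal row $x$ is zero.
   Context: This is the per-atom update of a K-SVD-type dictionary learning scheme with the row-sparsity ($\ell_{2,1}$) penalty $\lambda\sum_j\|x_j\|_2$, where $R$ is the residual after removing the contribution of the current atom; in the paper $d_0$ is the current (previous) atom. *)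

theory Defs
  imports "HOL-Analysis.Analysis"
begin

definition singular_triple :: "real^'n^'m \<Rightarrow> real \<Rightarrow> real^'m \<Rightarrow> real^'n \<Rightarrow> bool" where
  "singular_triple R s u v \<longleftrightarrow> s \<ge> 0 \<and> norm u = 1 \<and> norm v = 1 \<and>
     R *v v = s *\<^sub>R u \<and> transpose R *v u = s *\<^sub>R v"

definition largest_singular_triple :: "real^'n^'m \<Rightarrow> real \<Rightarrow> real^'m \<Rightarrow> real^'n \<Rightarrow> bool" where
  "largest_singular_triple R s u v \<longleftrightarrow> singular_triple R s u v \<and>
     (\<forall>s' u' v'. singular_triple R s' u' v' \<longrightarrow> s' \<le> s)"

definition frob_sq_resid :: "real^'m \<Rightarrow> real^'n \<Rightarrow> real^'n^'m \<Rightarrow> real" where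
  "frob_sq_resid d x R = (\<Sum>i\<in>UNIV. \<Sum>j\<in>UNIV. (d $ i * x $ j - R $ i $ j)^2)"

definition atom_obj :: "real \<Rightarrow> real^'n^'m \<Rightarrow> real^'m \<Rightarrow> real^'n \<Rightarrow> real" where
  "atom_obj lam R d x = frob_sq_resid d x R / 2 + lam * norm x"

definition is_minimizer :: "real \<Rightarrow> real^'n^'m \<Rightarrow> real^'m \<Rightarrow> real^'n \<Rightarrow> bool" where
  "is_minimizer lam R d x \<longleftrightarrow> norm d = 1 \<and>
     (\<forall>d' x'. norm d' = 1 \<longrightarrow> atom_obj lam R d x \<le> atom_obj lam R d' x')"

end

theory Submission
  imports Defs
begin

lemma tr_inner: "inner (transpose (R::real^'n^'m) *v x) y = inner x (R *v y)"
  by (simp add: dot_lmul_matrix)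

lemma norm_sq_lin:
  fixes p q :: "'a::real_inner"
  shows "(norm (p + t *\<^sub>R q))^2 = (norm p)^2 + 2*t*inner p q + t^2*(norm q)^2"
  unfolding power2_norm_eq_inner
  by (simp add: inner_add_left inner_add_right inner_commute algebra_simps power2_eq_square)

lemma quad_zero:
  fixes c K :: real
  assumes "\<forall>t. 0 \<le> 2*t*c + t^2*K"
  shows "c = 0"
proof (rule ccontr)
  assume "c \<noteq> 0"
  define t where "t = - c / (\<bar>K\<bar> + 1)"
  have p: "\<bar>K\<bar> + 1 > 0" by simp
  have "0 \<le> 2*t*c + t^2*K" using assms by blast
  hence "0 \<le> (2*t*c + t^2*K) * (\<bar>K\<bar>+1)^2" by simp
  also have "(2*t*c + t^2*K) * (\<bar>K\<bar>+1)^2 = -2*c^2*(\<bar>K\<bar>+1) + c^2*K"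
  proof -
    have tt: "t * (\<bar>K\<bar>+1) = -c" unfolding t_def using p by simp
    have "(2*t*c + t^2*K) * (\<bar>K\<bar>+1)^2 = 2*c*(t*(\<bar>K\<bar>+1))*(\<bar>K\<bar>+1) + (t*(\<bar>K\<bar>+1))^2*K"
      by (simp add: algebra_simps power2_eq_square)
    also have "\<dots> = 2*c*(-c)*(\<bar>K\<bar>+1) + (-c)^2*K" by (simp only: tt)
    finally show ?thesis by (simp add: algebra_simps power2_eq_square)
  qed
  also have "\<dots> \<le> -2*c^2*(\<bar>K\<bar>+1) + c^2*\<bar>K\<bar>"
    by (simp add: mult_left_mono)
  also have "\<dots> = -(c^2 * (\<bar>K\<bar> + 2))" by (simp add: algebra_simps)
  also have "\<dots> < 0" using \<open>c \<noteq> 0\<close> by (simp add: mult_pos_pos)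
  finally show False by simp
qed

lemma opnorm_bound:
  fixes R :: "real^'n^'m"
  assumes "largest_singular_triple R s1 u1 v1"
  shows "norm (transpose R *v d) \<le> s1 * norm d"
proof -
  define h where "h = (\<lambda>d::real^'m. (norm (transpose R *v d))^2)"
  have s1: "s1 \<ge> 0" using assms unfolding largest_singular_triple_def singular_triple_def by simp
  have cont: "continuous_on UNIV h" unfolding h_def
    by (intro continuous_intros)
  have cpt: "compact (sphere (0::real^'m) 1)" by simp
  have ne: "sphere (0::real^'m) 1 \<noteq> {}" by simp
  obtain ds where ds: "ds \<in> sphere 0 1" and dmax: "\<forall>y\<in>sphere 0 1. h y \<le> h ds"
    using continuous_attains_sup[OF cpt ne continuous_on_subset[OF cont]] by blast
  have nds: "norm ds = 1" using ds by simp
  define mu where "mu = h ds"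
  have mu0: "mu \<ge> 0" unfolding mu_def h_def by simp
  have hle: "h y \<le> mu * (norm y)^2" for y
  proof (cases "y = 0")
    case True thus ?thesis by (simp add: h_def)
  next
    case False
    hence ny: "norm y > 0" by simp
    have "h (y /\<^sub>R norm y) \<le> mu" using dmax ny unfolding mu_def by simp
    moreover have "h (y /\<^sub>R norm y) = h y / (norm y)^2"
      unfolding h_def using ny by (simp add: matrix_vector_mult_scaleR power_divide power_mult_distrib field_simps)
    ultimately show ?thesis using ny by (simp add: divide_le_eq mult.commute)
  qed
  define a where "a = transpose R *v ds"
  define w where "w = R *v a"
  have key: "inner (mu *\<^sub>R ds - w) y = 0" for y
  proof -
    define b where "b = transpose R *v y"
    define c where "c = mu * inner ds y - inner a b"
    define K where "K = mu * (norm y)^2 - (norm b)^2"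
    have "0 \<le> 2*t*c + t^2*K" for t
    proof -
      have "h (ds + t *\<^sub>R y) \<le> mu * (norm (ds + t *\<^sub>R y))^2" by (rule hle)
      moreover have "h (ds + t *\<^sub>R y) = (norm a)^2 + 2*t*inner a b + t^2*(norm b)^2"
        unfolding h_def a_def b_def
        by (simp only: matrix_vector_right_distrib matrix_vector_mult_scaleR norm_sq_lin)
      moreover have "(norm (ds + t *\<^sub>R y))^2 = 1 + 2*t*inner ds y + t^2*(norm y)^2"
        using nds by (simp only: norm_sq_lin) simp
      moreover have "(norm a)^2 = mu" unfolding a_def mu_def h_def by simp
      ultimately show ?thesis unfolding c_def K_def by (simp add: algebra_simps power2_eq_square)
    qed
    hence "c = 0" using quad_zero by blast
    moreover have "inner a b = inner w y" unfolding a_def b_def w_def transpose_matrix_vector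
      by (metis dot_lmul_matrix inner_commute)
    ultimately show ?thesis unfolding c_def by (simp add: inner_diff_left)
  qed
  have weq: "w = mu *\<^sub>R ds"
    using key[of "mu *\<^sub>R ds - w"] by simp
  show ?thesis
  proof (cases "mu = 0")
    case True
    hence "h d \<le> 0" using hle[of d] by simp
    hence "norm (transpose R *v d) = 0" unfolding h_def by simp
    thus ?thesis using s1 by simp
  next
    case False
    hence mup: "mu > 0" using mu0 by simp
    define s where "s = sqrt mu"
    have sp: "s > 0" unfolding s_def using mup by simp
    have ss: "s * s = mu" unfolding s_def using mu0 by simp
    define v where "v = (1/s) *\<^sub>R a"
    have na: "norm a = s" unfolding s_def mu_def h_def a_def by simp
    have "singular_triple R s ds v"
      unfolding singular_triple_def
    proof (intro conjI)
      show "0 \<le> s" using sp by simp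
      show "norm ds = 1" by fact
      show "norm v = 1" unfolding v_def using na sp by simp
      show "R *v v = s *\<^sub>R ds" unfolding v_def
        using weq sp ss by (simp add: matrix_vector_mult_scaleR w_def[symmetric] field_simps)
      show "transpose R *v ds = s *\<^sub>R v" unfolding v_def a_def using sp by simp
    qed
    hence sle: "s \<le> s1" using assms unfolding largest_singular_triple_def by blast
    have "(norm (transpose R *v d))^2 \<le> (s * norm d)^2"
    proof -
      have "(s * norm d)^2 = mu * (norm d)^2" using ss by (simp add: power_mult_distrib power2_eq_square)
      thus ?thesis using hle[of d] unfolding h_def by simp
    qed
    hence "norm (transpose R *v d) \<le> s * norm d"
      using sp by (meson norm_ge_zero power2_le_imp_le mult_nonneg_nonneg less_imp_le)
    also have "\<dots> \<le> s1 * norm d" using sle by (simp add: mult_right_mono)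
    finally show ?thesis .
  qed
qed

lemma norm_sq_vec: "(norm (v::real^'k))^2 = (\<Sum>i\<in>UNIV. (v$i)^2)"
  unfolding power2_norm_eq_inner inner_vec_def by (simp add: power2_eq_square)

lemma frob_expand:
  fixes d :: "real^'m" and x :: "real^'n" and R :: "real^'n^'m"
  shows "frob_sq_resid d x R = (norm d)^2*(norm x)^2 - 2 * inner d (R *v x)
           + (\<Sum>i\<in>UNIV. \<Sum>j\<in>UNIV. (R$i$j)^2)"
proof -
  have e1: "(\<Sum>j\<in>UNIV. (d$i * x$j - R$i$j)^2) = (d$i)^2 * (\<Sum>j\<in>UNIV. (x$j)^2) - 2 * (d$i * (\<Sum>j\<in>UNIV. R$i$j * x$j)) + (\<Sum>j\<in>UNIV. (R$i$j)^2)" for i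
  proof -
    have "(\<Sum>j\<in>UNIV. (d$i * x$j - R$i$j)^2) = (\<Sum>j\<in>UNIV. (d$i)^2 * (x$j)^2 - 2 * (d$i * (R$i$j * x$j)) + (R$i$j)^2)"
      by (intro sum.cong refl) (simp add: power2_eq_square algebra_simps)
    also have "\<dots> = (\<Sum>j\<in>UNIV. (d$i)^2 * (x$j)^2) - (\<Sum>j\<in>UNIV. 2 * (d$i * (R$i$j * x$j))) + (\<Sum>j\<in>UNIV. (R$i$j)^2)"
      by (simp only: sum.distrib sum_subtractf)
    also have "\<dots> = (d$i)^2 * (\<Sum>j\<in>UNIV. (x$j)^2) - 2 * (d$i * (\<Sum>j\<in>UNIV. R$i$j * x$j)) + (\<Sum>j\<in>UNIV. (R$i$j)^2)"
      by (simp only: sum_distrib_left)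
    finally show ?thesis .
  qed
  have "frob_sq_resid d x R = (\<Sum>i\<in>UNIV. (d$i)^2 * (\<Sum>j\<in>UNIV. (x$j)^2) - 2 * (d$i * (\<Sum>j\<in>UNIV. R$i$j * x$j)) + (\<Sum>j\<in>UNIV. (R$i$j)^2))"
    unfolding frob_sq_resid_def e1 ..
  also have "\<dots> = (\<Sum>i\<in>UNIV. (d$i)^2) * (\<Sum>j\<in>UNIV. (x$j)^2) - 2 * (\<Sum>i\<in>UNIV. d$i * (\<Sum>j\<in>UNIV. R$i$j * x$j))
      + (\<Sum>i\<in>UNIV. \<Sum>j\<in>UNIV. (R$i$j)^2)"
  proof -
    have a1: "(\<Sum>i\<in>UNIV. (d$i)^2 * (\<Sum>j\<in>UNIV. (x$j)^2)) = (\<Sum>i\<in>UNIV. (d$i)^2) * (\<Sum>j\<in>UNIV. (x$j)^2)"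
      by (rule sum_distrib_right[symmetric])
    have a2: "(\<Sum>i\<in>UNIV. 2 * (d$i * (\<Sum>j\<in>UNIV. R$i$j * x$j))) = 2 * (\<Sum>i\<in>UNIV. d$i * (\<Sum>j\<in>UNIV. R$i$j * x$j))"
      by (rule sum_distrib_left[symmetric])
    show ?thesis by (simp only: sum.distrib sum_subtractf a1 a2)
  qed
  also have "\<dots> = (norm d)^2*(norm x)^2 - 2 * inner d (R *v x) + (\<Sum>i\<in>UNIV. \<Sum>j\<in>UNIV. (R$i$j)^2)"
    by (simp only: norm_sq_vec) (simp add: inner_vec_def matrix_vector_mult_def)
  finally show ?thesis .
qed

lemma obj_unit:
  fixes d :: "real^'m" and x :: "real^'n" and R :: "real^'n^'m"
  assumes "norm d = 1"
  shows "atom_obj lam R d x = (norm x)^2/2 - inner d (R *v x)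
           + (\<Sum>i\<in>UNIV. \<Sum>j\<in>UNIV. (R$i$j)^2)/2 + lam * norm x"
  unfolding atom_obj_def frob_expand using assms by (simp add: field_simps)

lemma obj_lower:
  fixes d :: "real^'m" and x :: "real^'n" and R :: "real^'n^'m"
  assumes "norm d = 1" and "largest_singular_triple R s1 u1 v1"
  shows "atom_obj lam R d x \<ge> (norm x)^2/2 - s1 * norm x
           + (\<Sum>i\<in>UNIV. \<Sum>j\<in>UNIV. (R$i$j)^2)/2 + lam * norm x"
proof -
  have "inner d (R *v x) = inner (transpose R *v d) x" by (metis tr_inner)
  also have "\<dots> \<le> norm (transpose R *v d) * norm x" by (rule norm_cauchy_schwarz)
  also have "\<dots> \<le> s1 * norm x"
    using opnorm_bound[OF assms(2), of d] assms(1) by (simp add: mult_right_mono)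
  finally have "inner d (R *v x) \<le> s1 * norm x" .
  thus ?thesis using obj_unit[OF assms(1), of lam R x] by linarith
qed

theorem proposition2:
  fixes R :: "real^'n^'m" and lam s1 :: real and u1 :: "real^'m" and v1 :: "real^'n"
  assumes "lam \<ge> 0"
    and "largest_singular_triple R s1 u1 v1"
  shows "(s1 \<ge> lam \<longrightarrow> is_minimizer lam R u1 ((s1 - lam) *\<^sub>R v1))
       \<and> (s1 < lam \<longrightarrow> (\<forall>d0::real^'m. norm d0 = 1 \<longrightarrow> is_minimizer lam R d0 0))"
proof (intro conjI impI allI)
  define C where "C = (\<Sum>i\<in>UNIV. \<Sum>j\<in>UNIV. (R$i$j)^2)"
  have st: "singular_triple R s1 u1 v1" using assms(2) unfolding largest_singular_triple_def by simp
  hence nu: "norm u1 = 1" and nv: "norm v1 = 1" and Rv: "R *v v1 = s1 *\<^sub>R u1"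
    unfolding singular_triple_def by auto
  {
    assume le: "lam \<le> s1"
    show "is_minimizer lam R u1 ((s1 - lam) *\<^sub>R v1)"
      unfolding is_minimizer_def
    proof (intro conjI allI impI)
      show "norm u1 = 1" by fact
      fix d' :: "real^'m" and x' :: "real^'n"
      assume nd: "norm d' = 1"
      have nx: "norm ((s1 - lam) *\<^sub>R v1) = s1 - lam" using nv le by simp
      have ip: "inner u1 (R *v ((s1 - lam) *\<^sub>R v1)) = (s1 - lam) * s1"
        using nu Rv by (simp add: matrix_vector_mult_scaleR power2_norm_eq_inner[symmetric])
      have "atom_obj lam R u1 ((s1 - lam) *\<^sub>R v1) = C/2 - (s1-lam)^2/2"
        unfolding obj_unit[OF nu] nx ip C_def[symmetric] by (simp add: power2_eq_square algebra_simps)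
      also have "\<dots> \<le> (norm x')^2/2 - s1 * norm x' + C/2 + lam * norm x'"
      proof -
        have "(norm x')^2/2 - s1 * norm x' + C/2 + lam * norm x' - (C/2 - (s1-lam)^2/2)
              = (norm x' - (s1 - lam))^2 / 2" by (simp add: power2_eq_square field_simps)
        moreover have "(norm x' - (s1 - lam))^2 / 2 \<ge> 0" by simp
        ultimately show ?thesis by linarith
      qed
      also have "\<dots> \<le> atom_obj lam R d' x'"
        using obj_lower[OF nd assms(2)] unfolding C_def by simp
      finally show "atom_obj lam R u1 ((s1 - lam) *\<^sub>R v1) \<le> atom_obj lam R d' x'" .
    qed
  }
  {
    fix d0 :: "real^'m"
    assume lt: "s1 < lam" and n0: "norm d0 = 1"
    show "is_minimizer lam R d0 0"
      unfolding is_minimizer_def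
    proof (intro conjI allI impI)
      show "norm d0 = 1" by fact
      fix d' :: "real^'m" and x' :: "real^'n"
      assume nd: "norm d' = 1"
      have "atom_obj lam R d0 0 = C/2" unfolding obj_unit[OF n0] C_def by simp
      also have "\<dots> \<le> (norm x')^2/2 - s1 * norm x' + C/2 + lam * norm x'"
      proof -
        have "0 \<le> (lam - s1) * norm x'" using lt by simp
        moreover have "0 \<le> (norm x')^2/2" by simp
        moreover have "(norm x')^2/2 - s1 * norm x' + C/2 + lam * norm x'
           = C/2 + (lam - s1) * norm x' + (norm x')^2/2" by (simp add: algebra_simps)
        ultimately show ?thesis by linarith
      qed
      also have "\<dots> \<le> atom_obj lam R d' x'"
        using obj_lower[OF nd assms(2)] unfolding C_def by simp
      finally show "atom_obj lam R d0 0 \<le> atom_obj lam R d' x'" .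
    qed
  }
qed

end
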